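(* No distribution $p\in\operatorname{RBM}_{3,2}$ has four modes; that is, there is no $p\in\operatorname{RBM}_{3,2}$ and set $S\subseteq\{0,1\}^3$ of four states such that for every $x\in S$ and every Hamming neighbour $y$ of $x$ one has $p_x>p_y$.
   Context: A distribution of three binary random variables is a $2\times2\times2$ tensor $p=(p_x)_{x\in\{0,1\}^3}$ with nonnegative entries summing to $1$; the set of these is $\Delta_7$. Two states in $\{0,1\}^3$ are Hamming neighbours if they differ in exactly one coordinate. A mode of $p$ is a state $x$ with $p_x>p_y$ for every Hamming neighbour $y$ of $x$. For $a,b,c\in\mathbb{R}^2_{\ge0}$, $a\otimes b\otimes c$ is the tensor with entries $a_ib_jc_k$. $\operatorname{RBM}_{3,2}$ is the set of $p\in\Delta_7$ of the form $p=(a_1\otimes b_1\otimes c_1+d_1\otimes e_1\otimes f_1)*(a_2\otimes b_2\otimes c_2+d_2\otimes e_2\otimes f_2)$ with all vectors in $\mathbb{R}^2_{\ge0}$, where $*$ is the entrywise (Hadamard) product. *)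

theory Defs
  imports Complex_Main
begin

text \<open>States of three binary variables: bool \<times> bool \<times> bool (False = 0, True = 1).
 Vectors in R^2 are functions bool \<Rightarrow> real.\<close>

type_synonym state = "bool \<times> bool \<times> bool"

definition simplex7 :: "(state \<Rightarrow> real) set" where
  "simplex7 = {p. (\<forall>x. 0 \<le> p x) \<and> (\<Sum>x\<in>UNIV. p x) = 1}"

definition hamming_nb :: "state \<Rightarrow> state \<Rightarrow> bool" where
  "hamming_nb x y \<longleftrightarrow>
     (case x of (x1, x2, x3) \<Rightarrow> case y of (y1, y2, y3) \<Rightarrow>
       (if x1 \<noteq> y1 then 1 else 0) + (if x2 \<noteq> y2 then 1 else 0)
       + (if x3 \<noteq> y3 then 1 else (0::nat)) = 1)"

definition is_mode :: "(state \<Rightarrow> real) \<Rightarrow> state \<Rightarrow> bool" where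
  "is_mode p x \<longleftrightarrow> (\<forall>y. hamming_nb x y \<longrightarrow> p x > p y)"

definition nonneg2 :: "(bool \<Rightarrow> real) \<Rightarrow> bool" where
  "nonneg2 v \<longleftrightarrow> (\<forall>i. 0 \<le> v i)"

definition tens3 :: "(bool \<Rightarrow> real) \<Rightarrow> (bool \<Rightarrow> real) \<Rightarrow> (bool \<Rightarrow> real) \<Rightarrow> state \<Rightarrow> real" where
  "tens3 a b c = (\<lambda>(i, j, k). a i * b j * c k)"

definition RBM32 :: "(state \<Rightarrow> real) set" where
  "RBM32 = {p \<in> simplex7. \<exists>a1 b1 c1 d1 e1 f1 a2 b2 c2 d2 e2 f2.
      nonneg2 a1 \<and> nonneg2 b1 \<and> nonneg2 c1 \<and> nonneg2 d1 \<and> nonneg2 e1 \<and> nonneg2 f1 \<and>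
      nonneg2 a2 \<and> nonneg2 b2 \<and> nonneg2 c2 \<and> nonneg2 d2 \<and> nonneg2 e2 \<and> nonneg2 f2 \<and>
      p = (\<lambda>x. (tens3 a1 b1 c1 x + tens3 d1 e1 f1 x) * (tens3 a2 b2 c2 x + tens3 d2 e2 f2 x))}"

end

theory Submission
  imports Defs
begin

lemma card_bb: "card (UNIV :: (bool \<times> bool) set) = 4"
  by (simp add: card_UNIV_bool flip: UNIV_Times_UNIV add: card_cartesian_product)

lemma cover1:
  fixes S :: "state set"
  assumes c: "card S = 4" and na: "\<forall>x\<in>S. \<forall>y\<in>S. \<not> hamming_nb x y"
  and f: "\<And>x y. x \<noteq> y \<Longrightarrow> g x = g y \<Longrightarrow> hamming_nb x y"
  shows "g ` S = (UNIV :: (bool \<times> bool) set)"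
proof -
  have inj: "inj_on g S" using na f unfolding inj_on_def by blast
  have "card (g ` S) = 4" using card_image[OF inj] c by simp
  thus ?thesis using card_eq_UNIV_imp_eq_UNIV card_bb by (metis finite)
qed

lemma comb:
  fixes S :: "state set"
  assumes c: "card S = 4" and na: "\<forall>x\<in>S. \<forall>y\<in>S. \<not> hamming_nb x y"
  shows "((False,False,False) \<in> S \<and> (False,True,True) \<in> S \<and> (True,False,True) \<in> S \<and> (True,True,False) \<in> S)
    \<or> ((True,False,False) \<in> S \<and> (False,True,False) \<in> S \<and> (False,False,True) \<in> S \<and> (True,True,True) \<in> S)"
proof -
  have g1: "(\<lambda>(i,j,k). (j,k)) ` S = UNIV"
    by (rule cover1[OF c na]) (auto simp: hamming_nb_def split: if_splits)
  have g2: "(\<lambda>(i,j,k). (i,k)) ` S = UNIV"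
    by (rule cover1[OF c na]) (auto simp: hamming_nb_def split: if_splits)
  have g3: "(\<lambda>(i,j,k). (i,j)) ` S = UNIV"
    by (rule cover1[OF c na]) (auto simp: hamming_nb_def split: if_splits)
  have e1: "\<And>j k. \<exists>i. (i,j,k) \<in> S"
  proof -
    fix j k
    have "(j,k) \<in> (\<lambda>(i,j,k). (j,k)) ` S" using g1 by simp
    thus "\<exists>i. (i,j,k) \<in> S" by auto
  qed
  have e2: "\<And>i k. \<exists>j. (i,j,k) \<in> S"
  proof -
    fix i k
    have "(i,k) \<in> (\<lambda>(i,j,k). (i,k)) ` S" using g2 by simp
    thus "\<exists>j. (i,j,k) \<in> S" by auto
  qed
  have e3: "\<And>i j. \<exists>k. (i,j,k) \<in> S"
  proof -
    fix i j
    have "(i,j) \<in> (\<lambda>(i,j,k). (i,j)) ` S" using g3 by simp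
    thus "\<exists>k. (i,j,k) \<in> S" by auto
  qed
  have ex: "\<And>i j k. (\<exists>i'. (i',j,k) \<in> S) = ((False,j,k) \<in> S \<or> (True,j,k) \<in> S)"
    "\<And>i j k. (\<exists>j'. (i,j',k) \<in> S) = ((i,False,k) \<in> S \<or> (i,True,k) \<in> S)"
    "\<And>i j k. (\<exists>k'. (i,j,k') \<in> S) = ((i,j,False) \<in> S \<or> (i,j,True) \<in> S)"
    by (metis (full_types))+
  have hn: "\<And>x y. x \<in> S \<Longrightarrow> y \<in> S \<Longrightarrow> \<not> hamming_nb x y" using na by blast
  have h: "\<And>x y. x \<in> S \<Longrightarrow> hamming_nb x y \<Longrightarrow> y \<notin> S" using hn by blast
  have nb: "hamming_nb (False,False,False) (True,False,False)" "hamming_nb (False,False,False) (False,True,False)"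
    "hamming_nb (False,False,False) (False,False,True)" "hamming_nb (True,False,False) (True,True,False)"
    "hamming_nb (True,False,False) (True,False,True)" by (simp_all add: hamming_nb_def)
  show ?thesis
  proof (cases "(False,False,False) \<in> S")
    case True
    have n: "(True,False,False) \<notin> S" "(False,True,False) \<notin> S" "(False,False,True) \<notin> S"
      using h[OF True] nb by auto
    have "(True,True,False) \<in> S" using e1[of True False, unfolded ex] n by auto
    moreover have "(True,False,True) \<in> S" using e1[of False True, unfolded ex] n by auto
    moreover have "(False,True,True) \<in> S" using e2[of False True, unfolded ex] n by auto
    ultimately show ?thesis using True by blast
  next
    case False
    have t: "(True,False,False) \<in> S" using e1[of False False, unfolded ex] False by auto
    have n: "(True,True,False) \<notin> S" "(True,False,True) \<notin> S"
      using h[OF t] nb by auto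
    have "(False,True,False) \<in> S" using e2[of False False, unfolded ex] False by auto
    moreover have "(False,False,True) \<in> S" using e3[of False False, unfolded ex] False by auto
    moreover have "(True,True,True) \<in> S" using e3[of True True, unfolded ex] n by auto
    ultimately show ?thesis using t by blast
  qed
qed


lemma G1:
  fixes u00 u01 u10 u11 v00 v01 v10 v11 g h s t :: real
  assumes "0 \<le> u01" "0 \<le> u10" "0 \<le> v01" "0 \<le> v10"
    "u00*u11 - u01*u10 = g*s" "v00*v11 - v01*v10 = h*t" "0 \<le> g" "0 \<le> h" "0 \<le> s" "0 \<le> t"
  shows "(u01*v01)*(u10*v10) \<le> (u00*v00)*(u11*v11)"
proof -
  have a: "u01*u10 \<le> u00*u11" using assms(5,7,9) by (metis diff_ge_0_iff_ge mult_nonneg_nonneg)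
  have b: "v01*v10 \<le> v00*v11" using assms(6,8,10) by (metis diff_ge_0_iff_ge mult_nonneg_nonneg)
  have "(u01*u10)*(v01*v10) \<le> (u00*u11)*(v00*v11)"
    using mult_mono[OF a b] order_trans[OF mult_nonneg_nonneg[OF assms(1,2)] a] mult_nonneg_nonneg[OF assms(3,4)] by blast
  thus ?thesis by (simp add: algebra_simps)
qed

lemma G2:
  fixes u00 u01 u10 u11 v00 v01 v10 v11 g h s t :: real
  assumes "0 \<le> u00" "0 \<le> u11" "0 \<le> v00" "0 \<le> v11"
    "u00*u11 - u01*u10 = g*s" "v00*v11 - v01*v10 = h*t" "0 \<le> g" "0 \<le> h" "s \<le> 0" "t \<le> 0"
  shows "(u00*v00)*(u11*v11) \<le> (u01*v01)*(u10*v10)"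
proof -
  have a: "u00*u11 \<le> u01*u10" using assms(5,7,9) by (metis diff_le_0_iff_le mult_nonneg_nonpos)
  have b: "v00*v11 \<le> v01*v10" using assms(6,8,10) by (metis diff_le_0_iff_le mult_nonneg_nonpos)
  have "(u00*u11)*(v00*v11) \<le> (u01*u10)*(v01*v10)"
    using mult_mono[OF a b] order_trans[OF mult_nonneg_nonneg[OF assms(1,2)] a] mult_nonneg_nonneg[OF assms(3,4)] by blast
  thus ?thesis by (simp add: algebra_simps)
qed

lemma D:
  fixes U V :: "bool \<Rightarrow> bool \<Rightarrow> bool \<Rightarrow> real" and g h :: "bool \<Rightarrow> real" and \<sigma> \<tau> :: real
  assumes U0: "\<And>s i j. 0 \<le> U s i j" and V0: "\<And>s i j. 0 \<le> V s i j"
    and Ud: "\<And>s. U s False False * U s True True - U s False True * U s True False = g s * \<sigma>"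
    and Vd: "\<And>s. V s False False * V s True True - V s False True * V s True False = h s * \<tau>"
    and g0: "\<And>s. 0 \<le> g s" and h0: "\<And>s. 0 \<le> h s"
    and pos: "(U s1 False True * V s1 False True)*(U s1 True False * V s1 True False)
             < (U s1 False False * V s1 False False)*(U s1 True True * V s1 True True)"
    and neg: "(U s2 False False * V s2 False False)*(U s2 True True * V s2 True True)
             < (U s2 False True * V s2 False True)*(U s2 True False * V s2 True False)"
  shows "\<sigma> * \<tau> < 0"
proof (rule ccontr)
  assume "\<not> \<sigma> * \<tau> < 0"
  hence "(0 \<le> \<sigma> \<and> 0 \<le> \<tau>) \<or> (\<sigma> \<le> 0 \<and> \<tau> \<le> 0)"
    by (metis linorder_not_le mult_pos_neg mult_neg_pos order_le_less)
  thus False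
  proof
    assume "0 \<le> \<sigma> \<and> 0 \<le> \<tau>"
    thus False using G1[OF U0 U0 V0 V0 Ud[of s2] Vd[of s2] g0[of s2] h0[of s2]] neg by auto
  next
    assume "\<sigma> \<le> 0 \<and> \<tau> \<le> 0"
    thus False using G2[OF U0 U0 V0 V0 Ud[of s1] Vd[of s1] g0[of s1] h0[of s1]] pos by auto
  qed
qed

lemma signs:
  fixes a b c a' b' c' :: real
  assumes "(a*b)*(a'*b') < 0" "(b*c)*(b'*c') < 0" "(a*c)*(a'*c') < 0"
  shows False
proof -
  have "((a*b)*(a'*b')) * ((b*c)*(b'*c')) > 0" using assms by (simp add: mult_neg_neg)
  hence "((a*b)*(a'*b')) * ((b*c)*(b'*c')) * ((a*c)*(a'*c')) < 0" using assms(3)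
    by (simp add: mult_pos_neg)
  moreover have "((a*b)*(a'*b')) * ((b*c)*(b'*c')) * ((a*c)*(a'*c')) = (a*b*c*a'*b'*c')^2"
    by (simp add: power2_eq_square algebra_simps)
  ultimately show False by (metis not_less zero_le_power2)
qed



lemma ltlem:
  fixes x00 x01 x10 x11 :: real
  assumes "0 \<le> x01" "0 \<le> x10" "x01 < x00" "x10 < x11"
  shows "x01 * x10 < x00 * x11"
  using mult_strict_mono[OF assms(3,4)] assms by linarith

lemma hsym: "hamming_nb x y \<Longrightarrow> hamming_nb y x"
  by (cases x; cases y) (auto simp: hamming_nb_def split: if_splits)

theorem corollary4:
  shows "\<not> (\<exists>p \<in> RBM32. \<exists>S :: state set. card S = 4 \<and> (\<forall>x\<in>S. is_mode p x))"
proof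
  assume "\<exists>p \<in> RBM32. \<exists>S :: state set. card S = 4 \<and> (\<forall>x\<in>S. is_mode p x)"
  then obtain p S where pR: "p \<in> RBM32" and cS: "card (S::state set) = 4" and mS: "\<forall>x\<in>S. is_mode p x"
    by blast
  have "\<exists>a1 b1 c1 d1 e1 f1 a2 b2 c2 d2 e2 f2.
      nonneg2 a1 \<and> nonneg2 b1 \<and> nonneg2 c1 \<and> nonneg2 d1 \<and> nonneg2 e1 \<and> nonneg2 f1 \<and>
      nonneg2 a2 \<and> nonneg2 b2 \<and> nonneg2 c2 \<and> nonneg2 d2 \<and> nonneg2 e2 \<and> nonneg2 f2 \<and>
      p = (\<lambda>x. (tens3 a1 b1 c1 x + tens3 d1 e1 f1 x) * (tens3 a2 b2 c2 x + tens3 d2 e2 f2 x))"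
    using pR unfolding RBM32_def mem_Collect_eq by (rule conjunct2)
  then obtain a1 b1 c1 d1 e1 f1 a2 b2 c2 d2 e2 f2 where
    nn: "nonneg2 a1" "nonneg2 b1" "nonneg2 c1" "nonneg2 d1" "nonneg2 e1" "nonneg2 f1"
      "nonneg2 a2" "nonneg2 b2" "nonneg2 c2" "nonneg2 d2" "nonneg2 e2" "nonneg2 f2" and
    pe: "p = (\<lambda>x. (tens3 a1 b1 c1 x + tens3 d1 e1 f1 x) * (tens3 a2 b2 c2 x + tens3 d2 e2 f2 x))"
    by (elim exE conjE) (rule that[rotated 12], assumption+)
  define q1 where "q1 = (\<lambda>x. tens3 a1 b1 c1 x + tens3 d1 e1 f1 x)"
  define q2 where "q2 = (\<lambda>x. tens3 a2 b2 c2 x + tens3 d2 e2 f2 x)"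
  have pq: "\<And>x. p x = q1 x * q2 x" unfolding pe q1_def q2_def by simp
  have q10: "\<And>x. 0 \<le> q1 x" using nn unfolding q1_def nonneg2_def tens3_def
    by (auto split: prod.split intro!: add_nonneg_nonneg mult_nonneg_nonneg)
  have q20: "\<And>x. 0 \<le> q2 x" using nn unfolding q2_def nonneg2_def tens3_def
    by (auto split: prod.split intro!: add_nonneg_nonneg mult_nonneg_nonneg)
  have p0: "\<And>x. 0 \<le> p x" using pq q10 q20 by simp
  define \<alpha>1 where "\<alpha>1 = a1 False * d1 True - a1 True * d1 False"
  define \<beta>1 where "\<beta>1 = b1 False * e1 True - b1 True * e1 False"
  define \<gamma>1 where "\<gamma>1 = c1 False * f1 True - c1 True * f1 False"
  define \<alpha>2 where "\<alpha>2 = a2 False * d2 True - a2 True * d2 False"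
  define \<beta>2 where "\<beta>2 = b2 False * e2 True - b2 True * e2 False"
  define \<gamma>2 where "\<gamma>2 = c2 False * f2 True - c2 True * f2 False"
  have d13: "\<And>k. q1 (False,False,k) * q1 (True,True,k) - q1 (False,True,k) * q1 (True,False,k)
     = (c1 k * f1 k) * (\<alpha>1 * \<beta>1)"
    unfolding q1_def tens3_def \<alpha>1_def \<beta>1_def by (simp add: algebra_simps)
  have d23: "\<And>k. q2 (False,False,k) * q2 (True,True,k) - q2 (False,True,k) * q2 (True,False,k)
     = (c2 k * f2 k) * (\<alpha>2 * \<beta>2)"
    unfolding q2_def tens3_def \<alpha>2_def \<beta>2_def by (simp add: algebra_simps)
  have d11: "\<And>i. q1 (i,False,False) * q1 (i,True,True) - q1 (i,False,True) * q1 (i,True,False)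
     = (a1 i * d1 i) * (\<beta>1 * \<gamma>1)"
    unfolding q1_def tens3_def \<gamma>1_def \<beta>1_def by (simp add: algebra_simps)
  have d21: "\<And>i. q2 (i,False,False) * q2 (i,True,True) - q2 (i,False,True) * q2 (i,True,False)
     = (a2 i * d2 i) * (\<beta>2 * \<gamma>2)"
    unfolding q2_def tens3_def \<gamma>2_def \<beta>2_def by (simp add: algebra_simps)
  have d12: "\<And>j. q1 (False,j,False) * q1 (True,j,True) - q1 (False,j,True) * q1 (True,j,False)
     = (b1 j * e1 j) * (\<alpha>1 * \<gamma>1)"
    unfolding q1_def tens3_def \<gamma>1_def \<alpha>1_def by (simp add: algebra_simps)
  have d22: "\<And>j. q2 (False,j,False) * q2 (True,j,True) - q2 (False,j,True) * q2 (True,j,False)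
     = (b2 j * e2 j) * (\<alpha>2 * \<gamma>2)"
    unfolding q2_def tens3_def \<gamma>2_def \<alpha>2_def by (simp add: algebra_simps)
  have gg: "\<And>k. 0 \<le> c1 k * f1 k" "\<And>k. 0 \<le> c2 k * f2 k" "\<And>k. 0 \<le> a1 k * d1 k"
    "\<And>k. 0 \<le> a2 k * d2 k" "\<And>k. 0 \<le> b1 k * e1 k" "\<And>k. 0 \<le> b2 k * e2 k"
    using nn unfolding nonneg2_def by (auto intro!: mult_nonneg_nonneg)
  have na: "\<forall>x\<in>S. \<forall>y\<in>S. \<not> hamming_nb x y"
  proof (intro ballI notI)
    fix x y assume "x \<in> S" "y \<in> S" "hamming_nb x y"
    hence "p y < p x" "p x < p y" using mS hsym unfolding is_mode_def by blast+
    thus False by simp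
  qed
  have lt: "\<And>x y. x \<in> S \<Longrightarrow> hamming_nb x y \<Longrightarrow> p y < p x"
    using mS unfolding is_mode_def by blast
  have main: "\<And>s1 s2.
    (q1 (False,True,s1)*q2 (False,True,s1))*(q1 (True,False,s1)*q2 (True,False,s1))
       < (q1 (False,False,s1)*q2 (False,False,s1))*(q1 (True,True,s1)*q2 (True,True,s1)) \<Longrightarrow>
    (q1 (False,False,s2)*q2 (False,False,s2))*(q1 (True,True,s2)*q2 (True,True,s2))
       < (q1 (False,True,s2)*q2 (False,True,s2))*(q1 (True,False,s2)*q2 (True,False,s2)) \<Longrightarrow>
    (q1 (s1,True,False)*q2 (s1,True,False))*(q1 (s1,False,True)*q2 (s1,False,True))
       < (q1 (s1,False,False)*q2 (s1,False,False))*(q1 (s1,True,True)*q2 (s1,True,True)) \<Longrightarrow>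
    (q1 (s2,False,False)*q2 (s2,False,False))*(q1 (s2,True,True)*q2 (s2,True,True))
       < (q1 (s2,False,True)*q2 (s2,False,True))*(q1 (s2,True,False)*q2 (s2,True,False)) \<Longrightarrow>
    (q1 (False,s1,True)*q2 (False,s1,True))*(q1 (True,s1,False)*q2 (True,s1,False))
       < (q1 (False,s1,False)*q2 (False,s1,False))*(q1 (True,s1,True)*q2 (True,s1,True)) \<Longrightarrow>
    (q1 (False,s2,False)*q2 (False,s2,False))*(q1 (True,s2,True)*q2 (True,s2,True))
       < (q1 (False,s2,True)*q2 (False,s2,True))*(q1 (True,s2,False)*q2 (True,s2,False)) \<Longrightarrow> False"
  proof -
    fix s1 s2
    assume A: "(q1 (False,True,s1)*q2 (False,True,s1))*(q1 (True,False,s1)*q2 (True,False,s1))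
       < (q1 (False,False,s1)*q2 (False,False,s1))*(q1 (True,True,s1)*q2 (True,True,s1))"
      and B: "(q1 (False,False,s2)*q2 (False,False,s2))*(q1 (True,True,s2)*q2 (True,True,s2))
       < (q1 (False,True,s2)*q2 (False,True,s2))*(q1 (True,False,s2)*q2 (True,False,s2))"
      and C: "(q1 (s1,True,False)*q2 (s1,True,False))*(q1 (s1,False,True)*q2 (s1,False,True))
       < (q1 (s1,False,False)*q2 (s1,False,False))*(q1 (s1,True,True)*q2 (s1,True,True))"
      and E: "(q1 (s2,False,False)*q2 (s2,False,False))*(q1 (s2,True,True)*q2 (s2,True,True))
       < (q1 (s2,False,True)*q2 (s2,False,True))*(q1 (s2,True,False)*q2 (s2,True,False))"
      and F: "(q1 (False,s1,True)*q2 (False,s1,True))*(q1 (True,s1,False)*q2 (True,s1,False))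
       < (q1 (False,s1,False)*q2 (False,s1,False))*(q1 (True,s1,True)*q2 (True,s1,True))"
      and G: "(q1 (False,s2,False)*q2 (False,s2,False))*(q1 (True,s2,True)*q2 (True,s2,True))
       < (q1 (False,s2,True)*q2 (False,s2,True))*(q1 (True,s2,False)*q2 (True,s2,False))"
    have r3: "(\<alpha>1*\<beta>1)*(\<alpha>2*\<beta>2) < 0"
      apply (rule D[of "\<lambda>k i j. q1 (i,j,k)" "\<lambda>k i j. q2 (i,j,k)" "\<lambda>k. c1 k * f1 k" "\<alpha>1*\<beta>1"
            "\<lambda>k. c2 k * f2 k" "\<alpha>2*\<beta>2" s1 s2])
      using q10 q20 d13 d23 gg A B by simp_all
    have r1: "(\<beta>1*\<gamma>1)*(\<beta>2*\<gamma>2) < 0"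
      apply (rule D[of "\<lambda>i j k. q1 (i,j,k)" "\<lambda>i j k. q2 (i,j,k)" "\<lambda>k. a1 k * d1 k" "\<beta>1*\<gamma>1"
            "\<lambda>k. a2 k * d2 k" "\<beta>2*\<gamma>2" s1 s2])
      using q10 q20 d11 d21 gg C E by (simp_all add: mult.commute)
    have r2: "(\<alpha>1*\<gamma>1)*(\<alpha>2*\<gamma>2) < 0"
      apply (rule D[of "\<lambda>j i k. q1 (i,j,k)" "\<lambda>j i k. q2 (i,j,k)" "\<lambda>k. b1 k * e1 k" "\<alpha>1*\<gamma>1"
            "\<lambda>k. b2 k * e2 k" "\<alpha>2*\<gamma>2" s1 s2])
      using q10 q20 d12 d22 gg F G by simp_all
    show False using signs[OF r3 r1 r2] .
  qed
  have nbs: "\<And>x y. hamming_nb x y = hamming_nb x y" by simp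
  from comb[OF cS na] show False
  proof
    assume ev: "(False,False,False) \<in> S \<and> (False,True,True) \<in> S \<and> (True,False,True) \<in> S \<and> (True,True,False) \<in> S"
    show False
    proof (rule main[of False True])
    qed (rule ltlem, simp_all add: pq[symmetric] p0 lt ev hamming_nb_def)+
  next
    assume od: "(True,False,False) \<in> S \<and> (False,True,False) \<in> S \<and> (False,False,True) \<in> S \<and> (True,True,True) \<in> S"
    show False
    proof (rule main[of True False])
    qed (rule ltlem, simp_all add: pq[symmetric] p0 lt od hamming_nb_def)+
  qed
qed

end
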